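(* Let $\Omega\subset\mathbb{R}^2_+$ be a bounded Lipschitz open set with $[-\varepsilon_0,\varepsilon_0]\times\{0\}\subset\partial\Omega$, let $\varepsilon\in(0,\varepsilon_0]$, $\lambda\in\mathbb R$, and let $u\in\mathcal Q_\varepsilon$ be a nontrivial weak solution of $-\Delta u=\lambda u$ in $\Omega$, $u=0$ on $\partial\Omega\setminus\Gamma_\varepsilon$, $\partial_\nu u=0$ on $\Gamma_\varepsilon$. Let $j_L,j_R$ be odd positive integers and $\beta_L,\beta_R\in\mathbb R\setminus\{0\}$ be such that, with $\boldsymbol\theta(t)=(\cos t,\sin t)$ and $\boldsymbol\tau(t)=(-\sin t,\cos t)$, as $\delta\to0^+$: $\delta^{-j_L/2}u((-\varepsilon,0)+\delta\boldsymbol\theta(t))\to\beta_L\cos(\frac{j_L}{2}t)$ and $\delta^{-j_R/2}u((\varepsilon,0)+\delta\boldsymbol\theta(t))\to\beta_R\sin(\frac{j_R}{2}t)$ in $C^{1,\sigma}([0,\pi])$, and $\delta^{-j_L/2+1}\nabla u((-\varepsilon,0)+\delta\boldsymbol\theta(t))\to\frac{j_L\beta_L}{2}\big(\cos(\frac{j_L}2t)\boldsymbol\theta(t)-\sin(\frac{j_L}2t)\boldsymbol\tau(t)\big)$, $\delta^{-j_R/2+1}\nabla u((\varepsilon,0)+\delta\boldsymbol\theta(t))\to\frac{j_R\beta_R}{2}\big(\sin(\frac{j_R}2t)\boldsymbol\theta(t)+\cos(\frac{j_R}2t)\boldsymbol\tau(t)\big)$ in $C^{0,\sigma}([0,\pi])$,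 for all $\sigma\in(0,1)$. Define $$M(\varepsilon,u,\lambda)=\lim_{\delta\to0^+}\int_{\mathbb{R}^2_+\cap\partial A^\varepsilon_\delta}\Big(\tfrac12|\nabla u|^2x\cdot\mathbf n-\frac{\partial u}{\partial\mathbf n}(x\cdot\nabla u)-\tfrac\lambda2u^2\,x\cdot\mathbf n\Big)ds,$$ where $A^\varepsilon_\delta=D^+_\delta(-\varepsilon,0)\cup D^+_\delta(\varepsilon,0)$ and $\mathbf n$ is the unit normal to $\partial A^\varepsilon_\delta$ pointing into $A^\varepsilon_\delta$. Then the limit exists and $$M(\varepsilon,u,\lambda)=\begin{cases}0,&j_L>1,\ j_R>1,\\-\varepsilon\frac\pi8\beta_L^2,&j_L=1,\ j_R>1,\\-\varepsilon\frac\pi8\beta_R^2,&j_L>1,\ j_R=1,\\-\varepsilon\frac\pi8(\beta_L^2+\beta_R^2),&j_L=j_R=1.\end{cases}$$ In particular $M(\varepsilon,u,\lambda)\le0$.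
   Context: $\Gamma_\varepsilon=[-\varepsilon,\varepsilon]\times\{0\}$, $\mathcal Q_\varepsilon=\{u\in H^1(\Omega):\text{trace of }u=0\text{ on }\partial\Omega\setminus\Gamma_\varepsilon\}$. $D^+_\delta(a)=\{x\in\mathbb{R}^2:|x-a|<\delta,\ x_2>0\}$. The orientation of $\mathbf n$ is that of the exterior normal to the region $D^+_r\setminus A^\varepsilon_\delta$ (with $D^+_r$ the upper half-disk of radius $r>\varepsilon+\delta$ centered at $0$), i.e. on the half-circle $\{|x\mp(\varepsilon,0)|=\delta, x_2>0\}$ one has $\mathbf n=-(x\mp(\varepsilon,0))/\delta$. *)

theory Defs
  imports "HOL-Analysis.Analysis"
begin

type_synonym pt = "real \<times> real"

definition upper_half :: "pt set" where
  "upper_half = {x. snd x > 0}"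

definition lipschitz_open_set :: "pt set \<Rightarrow> bool" where
  "lipschitz_open_set \<Omega> \<longleftrightarrow> open \<Omega> \<and> bounded \<Omega> \<and>
     (\<forall>p\<in>frontier \<Omega>. \<exists>(R::pt\<Rightarrow>pt) (a::real) (b::real) (L::real) (\<gamma>::real\<Rightarrow>real). orthogonal_transformation R \<and> 0 < a \<and> 0 < b \<and>
        L-lipschitz_on UNIV \<gamma> \<and> \<gamma> 0 = 0 \<and> (\<forall>s. \<bar>s\<bar> < a \<longrightarrow> \<bar>\<gamma> s\<bar> < b) \<and>
        (\<forall>y1 y2. \<bar>y1\<bar> < a \<and> \<bar>y2\<bar> < b \<longrightarrow> (p + R (y1, y2) \<in> \<Omega> \<longleftrightarrow> y2 > \<gamma> y1)))"

definition Gamma :: "real \<Rightarrow> pt set" where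
  "Gamma \<epsilon> = {(s, 0) | s. \<bar>s\<bar> \<le> \<epsilon>}"

definition L2_on :: "pt set \<Rightarrow> (pt \<Rightarrow> 'a::euclidean_space) \<Rightarrow> bool" where
  "L2_on \<Omega> f \<longleftrightarrow> f \<in> borel_measurable (lebesgue_on \<Omega>) \<and>
     integrable (lebesgue_on \<Omega>) (\<lambda>x. (norm (f x))\<^sup>2)"

definition C1c_in :: "pt set \<Rightarrow> (pt \<Rightarrow> real) \<Rightarrow> (pt \<Rightarrow> pt) \<Rightarrow> bool" where
  "C1c_in S \<phi> D \<longleftrightarrow> (\<forall>x. (\<phi> has_derivative (\<lambda>h. D x \<bullet> h)) (at x)) \<and> continuous_on UNIV D \<and>
     compact (closure {x. \<phi> x \<noteq> 0}) \<and> closure {x. \<phi> x \<noteq> 0} \<subseteq> S"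

definition weak_gradient :: "pt set \<Rightarrow> (pt \<Rightarrow> real) \<Rightarrow> (pt \<Rightarrow> pt) \<Rightarrow> bool" where
  "weak_gradient \<Omega> u g \<longleftrightarrow> (\<forall>\<phi> D. C1c_in \<Omega> \<phi> D \<longrightarrow>
     (LINT x|lebesgue_on \<Omega>. u x *\<^sub>R D x) = - (LINT x|lebesgue_on \<Omega>. \<phi> x *\<^sub>R g x))"

definition H1 :: "pt set \<Rightarrow> (pt \<Rightarrow> real) \<Rightarrow> (pt \<Rightarrow> pt) \<Rightarrow> bool" where
  "H1 \<Omega> u g \<longleftrightarrow> L2_on \<Omega> u \<and> L2_on \<Omega> g \<and> weak_gradient \<Omega> u g"

text \<open>The space Q_eps: H^1(\<Omega>) functions whose trace vanishes on the boundary minus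
  Gamma_eps, described as the H^1(\<Omega>)-closure of restrictions of compactly supported
  C^1 functions whose support avoids the closure of (frontier \<Omega> - Gamma_eps).\<close>
definition Q_space :: "pt set \<Rightarrow> real \<Rightarrow> (pt \<Rightarrow> real) \<Rightarrow> (pt \<Rightarrow> pt) \<Rightarrow> bool" where
  "Q_space \<Omega> \<epsilon> v gv \<longleftrightarrow> H1 \<Omega> v gv \<and>
     (\<exists>\<phi> D. (\<forall>n. C1c_in (- closure (frontier \<Omega> - Gamma \<epsilon>)) (\<phi> n) (D n)) \<and>
        (\<lambda>n. LINT x|lebesgue_on \<Omega>. (v x - \<phi> n x)\<^sup>2 + (norm (gv x - D n x))\<^sup>2) \<longlonglongrightarrow> 0)"

text \<open>u (with weak gradient g) in Q_eps is a weak solution of -Laplace u = lambda u with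
  u = 0 on boundary minus Gamma_eps and zero Neumann data on Gamma_eps.\<close>
definition weak_eigenfunction :: "pt set \<Rightarrow> real \<Rightarrow> real \<Rightarrow> (pt \<Rightarrow> real) \<Rightarrow> (pt \<Rightarrow> pt) \<Rightarrow> bool" where
  "weak_eigenfunction \<Omega> \<epsilon> lam u g \<longleftrightarrow> Q_space \<Omega> \<epsilon> u g \<and>
     (\<forall>v gv. Q_space \<Omega> \<epsilon> v gv \<longrightarrow>
        (LINT x|lebesgue_on \<Omega>. g x \<bullet> gv x) = lam * (LINT x|lebesgue_on \<Omega>. u x * v x))"

definition C0_holder_conv :: "real set \<Rightarrow> real \<Rightarrow> (real \<Rightarrow> real \<Rightarrow> 'a::real_normed_vector)
    \<Rightarrow> (real \<Rightarrow> 'a) \<Rightarrow> real filter \<Rightarrow> bool" where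
  "C0_holder_conv S \<sigma> F f flt \<longleftrightarrow> (\<forall>e>0. \<forall>\<^sub>F \<delta> in flt.
     (\<forall>t\<in>S. norm (F \<delta> t - f t) \<le> e) \<and>
     (\<forall>s\<in>S. \<forall>t\<in>S. norm ((F \<delta> s - f s) - (F \<delta> t - f t)) \<le> e * \<bar>s - t\<bar> powr \<sigma>))"

definition C1_holder_conv :: "real set \<Rightarrow> real \<Rightarrow> (real \<Rightarrow> real \<Rightarrow> real)
    \<Rightarrow> (real \<Rightarrow> real) \<Rightarrow> real filter \<Rightarrow> bool" where
  "C1_holder_conv S \<sigma> F f flt \<longleftrightarrow> (\<exists>F' f'.
     (\<forall>t\<in>S. (f has_real_derivative f' t) (at t within S)) \<and>
     (\<forall>\<^sub>F \<delta> in flt. \<forall>t\<in>S. (F \<delta> has_real_derivative F' \<delta> t) (at t within S)) \<and>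
     C0_holder_conv S \<sigma> F f flt \<and> C0_holder_conv S \<sigma> F' f' flt)"

definition theta :: "real \<Rightarrow> pt" where "theta t = (cos t, sin t)"
definition tau :: "real \<Rightarrow> pt" where "tau t = (- sin t, cos t)"

text \<open>Integral over R^2_+ \<inter> \<partial>A^eps_delta (for 0 < delta < eps: two open half-circles
  of radius delta centred at (-eps,0),(eps,0)), w.r.t. arc length, of the Pohozaev
  integrand, with n the unit normal pointing into A (n = -theta(t)).\<close>
definition pohozaev_integrand :: "real \<Rightarrow> (pt \<Rightarrow> real) \<Rightarrow> (pt \<Rightarrow> pt) \<Rightarrow> pt \<Rightarrow> pt \<Rightarrow> real" where
  "pohozaev_integrand lam u g x n =
     1/2 * (norm (g x))\<^sup>2 * (x \<bullet> n) - (g x \<bullet> n) * (x \<bullet> g x) - lam/2 * (u x)\<^sup>2 * (x \<bullet> n)"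

definition half_circle_int :: "real \<Rightarrow> (pt \<Rightarrow> real) \<Rightarrow> (pt \<Rightarrow> pt) \<Rightarrow> pt \<Rightarrow> real \<Rightarrow> real" where
  "half_circle_int lam u g c \<delta> =
     integral {0..pi} (\<lambda>t. pohozaev_integrand lam u g (c + \<delta> *\<^sub>R theta t) (- theta t) * \<delta>)"

definition M_delta :: "real \<Rightarrow> real \<Rightarrow> (pt \<Rightarrow> real) \<Rightarrow> (pt \<Rightarrow> pt) \<Rightarrow> real \<Rightarrow> real" where
  "M_delta \<epsilon> lam u g \<delta> = half_circle_int lam u g (- \<epsilon>, 0) \<delta> + half_circle_int lam u g (\<epsilon>, 0) \<delta>"

end

theory Submission
  imports Defs
begin

lemma holder_unif:
  assumes "C0_holder_conv S \<sigma> F f flt"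
  shows "uniform_limit S F f flt"
proof (rule uniform_limitI)
  fix e :: real assume e: "e > 0"
  then have "e/2 > 0" by simp
  with assms have "\<forall>\<^sub>F \<delta> in flt. (\<forall>t\<in>S. norm (F \<delta> t - f t) \<le> e/2) \<and>
     (\<forall>s\<in>S. \<forall>t\<in>S. norm ((F \<delta> s - f s) - (F \<delta> t - f t)) \<le> e/2 * \<bar>s - t\<bar> powr \<sigma>)"
    unfolding C0_holder_conv_def by blast
  then have "\<forall>\<^sub>F \<delta> in flt. \<forall>t\<in>S. norm (F \<delta> t - f t) \<le> e/2"
    by (rule eventually_mono) blast
  then show "\<forall>\<^sub>F \<delta> in flt. \<forall>t\<in>S. dist (F \<delta> t) (f t) < e"
    by eventually_elim (use e in \<open>auto simp: dist_norm intro: le_less_trans\<close>)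
qed

lemma holder_cont:
  fixes F :: "real \<Rightarrow> real \<Rightarrow> 'a::real_normed_vector"
  assumes "C0_holder_conv S (1/2) F f flt" and fc: "continuous_on S f"
  shows "\<forall>\<^sub>F \<delta> in flt. continuous_on S (F \<delta>)"
proof -
  have "\<forall>\<^sub>F \<delta> in flt. \<forall>s\<in>S. \<forall>t\<in>S. norm ((F \<delta> s - f s) - (F \<delta> t - f t)) \<le> 1 * \<bar>s - t\<bar> powr (1/2)"
  proof -
    have "\<forall>\<^sub>F \<delta> in flt. (\<forall>t\<in>S. norm (F \<delta> t - f t) \<le> 1) \<and>
     (\<forall>s\<in>S. \<forall>t\<in>S. norm ((F \<delta> s - f s) - (F \<delta> t - f t)) \<le> 1 * \<bar>s - t\<bar> powr (1/2))"
      using assms(1) unfolding C0_holder_conv_def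
      by (drule_tac x=1 in spec) simp
    then show ?thesis by (rule eventually_mono) blast
  qed
  then show ?thesis
  proof eventually_elim
    case (elim \<delta>)
    have "continuous_on S (\<lambda>t. F \<delta> t - f t)"
      unfolding continuous_on_iff
    proof (intro ballI allI impI)
      fix x e assume x: "x \<in> S" and e: "(0::real) < e"
      show "\<exists>d>0. \<forall>x'\<in>S. dist x' x < d \<longrightarrow> dist (F \<delta> x' - f x') (F \<delta> x - f x) < e"
      proof (intro exI[of _ "e^2"] conjI ballI impI)
        show "0 < e^2" using e by simp
        fix x' assume x': "x' \<in> S" and d: "dist x' x < e^2"
        have "dist (F \<delta> x' - f x') (F \<delta> x - f x) \<le> \<bar>x' - x\<bar> powr (1/2)"
          using elim x x' by (simp add: dist_norm)
        also have "\<dots> = sqrt \<bar>x' - x\<bar>" by (simp add: powr_half_sqrt)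
        also have "\<dots> < sqrt (e^2)" using d by (intro real_sqrt_less_mono) (simp add: dist_real_def)
        also have "\<dots> = e" using e by simp
        finally show "dist (F \<delta> x' - f x') (F \<delta> x - f x) < e" .
      qed
    qed
    then have "continuous_on S (\<lambda>t. (F \<delta> t - f t) + f t)"
      by (intro continuous_on_add fc)
    then show ?case by simp
  qed
qed

lemma bnd: "continuous_on {0..pi} (f::real \<Rightarrow> 'a::metric_space) \<Longrightarrow> bounded (f ` {0..pi})"
  by (intro compact_imp_bounded compact_continuous_image) auto

lemma unif_tendsto:
  assumes "(f \<longlongrightarrow> l) F"
  shows "uniform_limit S (\<lambda>n x. f n) (\<lambda>x. l) F"
proof (rule uniform_limitI)
  fix e :: real assume "e > 0"
  then have "\<forall>\<^sub>F n in F. dist (f n) l < e" using assms tendsto_iff by blast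
  then show "\<forall>\<^sub>F n in F. \<forall>x\<in>S. dist (f n) l < e" by eventually_elim auto
qed

lemma theta_inner: "theta t \<bullet> theta t = 1"
  by (simp add: theta_def power2_eq_square[symmetric])

lemma pointwise:
  fixes c :: pt and j :: nat and \<delta> t lam :: real and u :: "pt \<Rightarrow> real" and g :: "pt \<Rightarrow> pt"
  assumes j: "j \<ge> 1" and d: "\<delta> > 0"
  defines "U \<equiv> \<delta> powr (- real j / 2) * u (c + \<delta> *\<^sub>R theta t)"
      and "G \<equiv> \<delta> powr (- real j / 2 + 1) *\<^sub>R g (c + \<delta> *\<^sub>R theta t)"
  shows "pohozaev_integrand lam u g (c + \<delta> *\<^sub>R theta t) (- theta t) * \<delta> =
     \<delta> ^ (j - 1) * (1/2*(G \<bullet> G)*(-(c \<bullet> theta t) - \<delta>) + (G \<bullet> theta t)*(c \<bullet> G + \<delta>*(theta t \<bullet> G))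
        + lam/2*\<delta>*\<delta>*(U*U)*(c \<bullet> theta t + \<delta>))"
proof -
  define a where "a = \<delta> powr (real j / 2 - 1)"
  define x where "x = c + \<delta> *\<^sub>R theta t"
  have ha: "a * \<delta> powr (- real j / 2 + 1) = 1" using d
    by (simp add: a_def powr_add[symmetric])
  have hg: "g x = a *\<^sub>R G"
    using ha by (simp add: G_def x_def)
  have hb: "a * \<delta> * \<delta> powr (- real j / 2) = 1" using d
    by (simp add: a_def powr_add[symmetric] mult.commute[of _ \<delta>] powr_mult_base)
  have hu: "u x = a * \<delta> * U"
    using hb by (simp add: U_def x_def)
  have haa: "a * a * \<delta> = \<delta> ^ (j - 1)"
  proof -
    have "a * a * \<delta> = \<delta> powr (real j / 2 - 1) * \<delta> powr (real j / 2 - 1) * \<delta> powr 1"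
      using d by (simp add: a_def)
    also have "\<dots> = \<delta> powr ((real j / 2 - 1) + (real j / 2 - 1) + 1)"
      by (simp only: powr_add)
    also have "(real j / 2 - 1) + (real j / 2 - 1) + 1 = real (j - 1)" using j by simp
    also have "\<delta> powr real (j - 1) = \<delta> ^ (j - 1)" using d by (simp add: powr_realpow)
    finally show ?thesis .
  qed
  have hn: "(norm (g x))\<^sup>2 = a * a * (G \<bullet> G)"
  proof -
    have "(norm (g x))\<^sup>2 = a\<^sup>2 * (norm G)\<^sup>2" by (simp add: hg power_mult_distrib)
    also have "\<dots> = a * a * (G \<bullet> G)" by (simp add: dot_square_norm power2_eq_square)
    finally show ?thesis .
  qed
  have th: "theta t \<bullet> theta t = 1" by (rule theta_inner)
  have "pohozaev_integrand lam u g x (- theta t) * \<delta> =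
     (a * a * \<delta>) * (1/2*(G \<bullet> G)*(-(c \<bullet> theta t) - \<delta>) + (G \<bullet> theta t)*(c \<bullet> G + \<delta>*(theta t \<bullet> G))
        + lam/2*\<delta>*\<delta>*(U*U)*(c \<bullet> theta t + \<delta>))"
    unfolding pohozaev_integrand_def hn unfolding hg hu
    apply (simp add: x_def inner_add_left inner_add_right th inner_commute[of "theta t" G] power2_eq_square)
    by (simp add: field_simps)
  then show ?thesis using haa by (simp add: x_def)
qed

lemma theta_cont[continuous_intros]: "continuous_on S (f::real\<Rightarrow>real) \<Longrightarrow> continuous_on S (\<lambda>x. theta (f x))"
  unfolding theta_def by (auto intro!: continuous_intros)

lemmas ul_mult = bounded_bilinear.bounded_uniform_limit[OF bounded_bilinear_mult]
lemmas ul_inner = bounded_bilinear.bounded_uniform_limit[OF bounded_bilinear_inner]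

lemma half_lim:
  fixes c :: pt and j :: nat and U0 :: "real \<Rightarrow> real" and G0 :: "real \<Rightarrow> pt"
    and u :: "pt \<Rightarrow> real" and g :: "pt \<Rightarrow> pt" and lam :: real
  assumes j: "j \<ge> 1"
  and U: "C0_holder_conv {0..pi} (1/2) (\<lambda>\<delta> t. \<delta> powr (- real j / 2) * u (c + \<delta> *\<^sub>R theta t)) U0 (at_right 0)"
  and G: "C0_holder_conv {0..pi} (1/2) (\<lambda>\<delta> t. \<delta> powr (- real j / 2 + 1) *\<^sub>R g (c + \<delta> *\<^sub>R theta t)) G0 (at_right 0)"
  and U0c: "continuous_on {0..pi} U0" and G0c: "continuous_on {0..pi} G0"
  shows "(half_circle_int lam u g c \<longlongrightarrow> (if j = 1 then integral {0..pi}
     (\<lambda>t. 1/2*(G0 t \<bullet> G0 t)*(-(c \<bullet> theta t)) + (G0 t \<bullet> theta t)*(c \<bullet> G0 t)) else 0)) (at_right 0)"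
proof -
  define Ud where "Ud = (\<lambda>\<delta> t. \<delta> powr (- real j / 2) * u (c + \<delta> *\<^sub>R theta t))"
  define Gd where "Gd = (\<lambda>\<delta> t. \<delta> powr (- real j / 2 + 1) *\<^sub>R g (c + \<delta> *\<^sub>R theta t))"
  define P where "P = (\<lambda>\<delta> t. 1/2*(Gd \<delta> t \<bullet> Gd \<delta> t)*(-(c \<bullet> theta t) - \<delta>) + (Gd \<delta> t \<bullet> theta t)*(c \<bullet> Gd \<delta> t + \<delta>*(theta t \<bullet> Gd \<delta> t))
        + lam/2*\<delta>*\<delta>*(Ud \<delta> t*Ud \<delta> t)*(c \<bullet> theta t + \<delta>))"
  define Q where "Q = (\<lambda>t. 1/2*(G0 t \<bullet> G0 t)*(-(c \<bullet> theta t) - 0) + (G0 t \<bullet> theta t)*(c \<bullet> G0 t + 0*(theta t \<bullet> G0 t))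
        + lam/2*0*0*(U0 t*U0 t)*(c \<bullet> theta t + 0))"
  have uU: "uniform_limit {0..pi} Ud U0 (at_right 0)" unfolding Ud_def by (rule holder_unif[OF U])
  have uG: "uniform_limit {0..pi} Gd G0 (at_right 0)" unfolding Gd_def by (rule holder_unif[OF G])
  have ud: "uniform_limit {0..pi} (\<lambda>\<delta> t. \<delta>) (\<lambda>t. 0) (at_right 0)"
    by (rule unif_tendsto) simp
  have uth: "uniform_limit {0..pi} (\<lambda>\<delta> t. theta t) (\<lambda>t. theta t) (at_right 0)"
    by (rule uniform_limit_const)
  have uP: "uniform_limit {0..pi} P Q (at_right 0)"
    unfolding P_def Q_def
    by (intro ul_mult ul_inner uniform_limit_add uniform_limit_minus uniform_limit_uminus uU uG ud uth uniform_limit_const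
         bnd continuous_intros U0c G0c)
  have cU: "\<forall>\<^sub>F \<delta> in at_right 0. continuous_on {0..pi} (Ud \<delta>)"
    unfolding Ud_def by (rule holder_cont[OF U U0c])
  have cG: "\<forall>\<^sub>F \<delta> in at_right 0. continuous_on {0..pi} (Gd \<delta>)"
    unfolding Gd_def by (rule holder_cont[OF G G0c])
  have cP: "\<forall>\<^sub>F \<delta> in at_right 0. continuous_on {0..pi} (P \<delta>)"
    using cU cG by eventually_elim (auto simp: P_def intro!: continuous_intros)
  have cQ: "continuous_on {0..pi} Q"
    unfolding Q_def by (intro continuous_intros U0c G0c)
  define P' where "P' = (\<lambda>\<delta>. if continuous_on {0..pi} (P \<delta>) then P \<delta> else Q)"
  have uP': "uniform_limit {0..pi} P' Q (at_right 0)"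
    unfolding uniform_limit_iff
  proof (intro allI impI)
    fix e :: real assume "e > 0"
    with uP have "\<forall>\<^sub>F \<delta> in at_right 0. \<forall>x\<in>{0..pi}. dist (P \<delta> x) (Q x) < e"
      unfolding uniform_limit_iff by blast
    then show "\<forall>\<^sub>F \<delta> in at_right 0. \<forall>x\<in>{0..pi}. dist (P' \<delta> x) (Q x) < e"
      by eventually_elim (use \<open>e > 0\<close> in \<open>auto simp: P'_def\<close>)
  qed
  have cP': "\<And>\<delta>. continuous_on {0..pi} (P' \<delta>)"
    using cQ by (simp add: P'_def)
  obtain I J where I: "\<And>\<delta>. (P' \<delta> has_integral I \<delta>) {0..pi}" and J: "(Q has_integral J) {0..pi}"
    and IJ: "(I \<longlongrightarrow> J) (at_right 0)"
    using uniform_limit_integral[OF uP' cP'] by auto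
  have intP: "((\<lambda>\<delta>. integral {0..pi} (P \<delta>)) \<longlongrightarrow> integral {0..pi} Q) (at_right 0)"
  proof -
    have "\<forall>\<^sub>F \<delta> in at_right 0. I \<delta> = integral {0..pi} (P \<delta>)"
      using cP
    proof eventually_elim
      case (elim \<delta>)
      have "(P \<delta> has_integral I \<delta>) {0..pi}" using I[of \<delta>] elim by (simp add: P'_def)
      then show ?case by (simp add: integral_unique)
    qed
    then show ?thesis using IJ J integral_unique[OF J] by (auto intro: tendsto_cong[THEN iffD1])
  qed
  have pw: "((\<lambda>\<delta>::real. \<delta> ^ (j - 1)) \<longlongrightarrow> (if j = 1 then 1 else 0)) (at_right 0)"
  proof (cases "j = 1")
    case True then show ?thesis by simp
  next
    case False
    have "((\<lambda>\<delta>::real. \<delta> ^ (j - 1)) \<longlongrightarrow> 0 ^ (j - 1)) (at_right 0)"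
      by (intro tendsto_intros)
    then show ?thesis using False j by simp
  qed
  have lim: "((\<lambda>\<delta>. \<delta> ^ (j - 1) * integral {0..pi} (P \<delta>)) \<longlongrightarrow> (if j = 1 then 1 else 0) * integral {0..pi} Q) (at_right 0)"
    by (rule tendsto_mult[OF pw intP])
  have eq: "\<forall>\<^sub>F \<delta> in at_right 0. \<delta> ^ (j - 1) * integral {0..pi} (P \<delta>) = half_circle_int lam u g c \<delta>"
    using eventually_at_right_less[of "0::real"]
  proof eventually_elim
    case (elim \<delta>)
    have "half_circle_int lam u g c \<delta> = integral {0..pi} (\<lambda>t. \<delta> ^ (j - 1) * P \<delta> t)"
      unfolding half_circle_int_def P_def Ud_def Gd_def
      using pointwise[OF j elim] by simp
    then show ?case by simp
  qed
  have Qeq: "Q = (\<lambda>t. 1/2*(G0 t \<bullet> G0 t)*(-(c \<bullet> theta t)) + (G0 t \<bullet> theta t)*(c \<bullet> G0 t))"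
    unfolding Q_def by simp
  show ?thesis using tendsto_cong[THEN iffD1, OF eq lim] Qeq by (simp split: if_splits)
qed

lemma tau_cont[continuous_intros]: "continuous_on S (f::real\<Rightarrow>real) \<Longrightarrow> continuous_on S (\<lambda>x. tau (f x))"
  unfolding tau_def by (auto intro!: continuous_intros)

lemma trigL:
  fixes \<epsilon> \<beta> t :: real
  defines "G \<equiv> (real (1::nat) * \<beta> / 2) *\<^sub>R (cos (real (1::nat) / 2 * t) *\<^sub>R theta t - sin (real (1::nat) / 2 * t) *\<^sub>R tau t)"
  shows "1/2*(G \<bullet> G)*(-((- \<epsilon>, 0) \<bullet> theta t)) + (G \<bullet> theta t)*((- \<epsilon>, 0) \<bullet> G) = - \<epsilon> * \<beta>\<^sup>2 / 8"
proof -
  define s where "s = t / 2"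
  have t: "t = 2 * s" by (simp add: s_def)
  have G': "G = (\<beta>/2) *\<^sub>R (cos s *\<^sub>R theta t - sin s *\<^sub>R tau t)" by (simp add: G_def s_def)
  have th: "theta t = (cos (2 * s), sin (2 * s))" by (simp add: theta_def t)
  have ta: "tau t = (- sin (2 * s), cos (2 * s))" by (simp add: tau_def t)
  obtain cs sn where cs: "cos s = cs" and sn: "sin s = sn" by blast
  have h: "sn^2 + cs^2 = 1" using sin_cos_squared_add[of s] cs sn by simp
  show ?thesis unfolding G' th ta cos_double sin_double cs sn
    apply (simp only: scaleR_Pair diff_Pair add_Pair inner_Pair inner_real_def real_scaleR_def)
    apply (rule trans[of _ "- \<epsilon> * \<beta>\<^sup>2 / 8 * (sn\<^sup>2 + cs\<^sup>2) ^ 4"])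
     apply (simp add: field_simps power2_eq_square power4_eq_xxxx)
    using h by simp
qed

lemma trigR:
  fixes \<epsilon> \<beta> t :: real
  defines "G \<equiv> (real (1::nat) * \<beta> / 2) *\<^sub>R (sin (real (1::nat) / 2 * t) *\<^sub>R theta t + cos (real (1::nat) / 2 * t) *\<^sub>R tau t)"
  shows "1/2*(G \<bullet> G)*(-((\<epsilon>, 0) \<bullet> theta t)) + (G \<bullet> theta t)*((\<epsilon>, 0) \<bullet> G) = - \<epsilon> * \<beta>\<^sup>2 / 8"
proof -
  define s where "s = t / 2"
  have t: "t = 2 * s" by (simp add: s_def)
  have G': "G = (\<beta>/2) *\<^sub>R (sin s *\<^sub>R theta t + cos s *\<^sub>R tau t)" by (simp add: G_def s_def)
  have th: "theta t = (cos (2 * s), sin (2 * s))" by (simp add: theta_def t)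
  have ta: "tau t = (- sin (2 * s), cos (2 * s))" by (simp add: tau_def t)
  obtain cs sn where cs: "cos s = cs" and sn: "sin s = sn" by blast
  have h: "sn^2 + cs^2 = 1" using sin_cos_squared_add[of s] cs sn by simp
  show ?thesis unfolding G' th ta cos_double sin_double cs sn
    apply (simp only: scaleR_Pair diff_Pair add_Pair inner_Pair inner_real_def real_scaleR_def)
    apply (rule trans[of _ "- \<epsilon> * \<beta>\<^sup>2 / 8 * (sn\<^sup>2 + cs\<^sup>2) ^ 4"])
     apply (simp add: field_simps power2_eq_square power4_eq_xxxx)
    using h by simp
qed

theorem lemmaC5:
  fixes \<Omega> :: "pt set" and \<epsilon>0 \<epsilon> lam \<beta>L \<beta>R :: real and jL jR :: nat
    and u :: "pt \<Rightarrow> real" and g :: "pt \<Rightarrow> pt"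
  assumes lip: "lipschitz_open_set \<Omega>" and half: "\<Omega> \<subseteq> upper_half"
    and edge: "Gamma \<epsilon>0 \<subseteq> frontier \<Omega>"
    and eps: "0 < \<epsilon>" "\<epsilon> \<le> \<epsilon>0"
    and sol: "weak_eigenfunction \<Omega> \<epsilon> lam u g"
    and nontriv: "\<not> (AE x in lebesgue_on \<Omega>. u x = 0)"
    and grad: "\<forall>x\<in>\<Omega>. (u has_derivative (\<lambda>h. g x \<bullet> h)) (at x)"
    and jodd: "odd jL" "odd jR"
    and beta: "\<beta>L \<noteq> 0" "\<beta>R \<noteq> 0"
    and asyL: "\<forall>\<sigma>. 0 < \<sigma> \<and> \<sigma> < 1 \<longrightarrow> C1_holder_conv {0..pi} \<sigma>
        (\<lambda>\<delta> t. \<delta> powr (- real jL / 2) * u ((- \<epsilon>, 0) + \<delta> *\<^sub>R theta t))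
        (\<lambda>t. \<beta>L * cos (real jL / 2 * t)) (at_right 0)"
    and asyR: "\<forall>\<sigma>. 0 < \<sigma> \<and> \<sigma> < 1 \<longrightarrow> C1_holder_conv {0..pi} \<sigma>
        (\<lambda>\<delta> t. \<delta> powr (- real jR / 2) * u ((\<epsilon>, 0) + \<delta> *\<^sub>R theta t))
        (\<lambda>t. \<beta>R * sin (real jR / 2 * t)) (at_right 0)"
    and gasyL: "\<forall>\<sigma>. 0 < \<sigma> \<and> \<sigma> < 1 \<longrightarrow> C0_holder_conv {0..pi} \<sigma>
        (\<lambda>\<delta> t. \<delta> powr (- real jL / 2 + 1) *\<^sub>R g ((- \<epsilon>, 0) + \<delta> *\<^sub>R theta t))
        (\<lambda>t. (real jL * \<beta>L / 2) *\<^sub>R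
              (cos (real jL / 2 * t) *\<^sub>R theta t - sin (real jL / 2 * t) *\<^sub>R tau t)) (at_right 0)"
    and gasyR: "\<forall>\<sigma>. 0 < \<sigma> \<and> \<sigma> < 1 \<longrightarrow> C0_holder_conv {0..pi} \<sigma>
        (\<lambda>\<delta> t. \<delta> powr (- real jR / 2 + 1) *\<^sub>R g ((\<epsilon>, 0) + \<delta> *\<^sub>R theta t))
        (\<lambda>t. (real jR * \<beta>R / 2) *\<^sub>R
              (sin (real jR / 2 * t) *\<^sub>R theta t + cos (real jR / 2 * t) *\<^sub>R tau t)) (at_right 0)"
  shows "\<exists>M. (M_delta \<epsilon> lam u g \<longlongrightarrow> M) (at_right 0) \<and>
           M = (if jL > 1 \<and> jR > 1 then 0
                else if jL = 1 \<and> jR > 1 then - \<epsilon> * pi / 8 * \<beta>L\<^sup>2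
                else if jL > 1 \<and> jR = 1 then - \<epsilon> * pi / 8 * \<beta>R\<^sup>2
                else - \<epsilon> * pi / 8 * (\<beta>L\<^sup>2 + \<beta>R\<^sup>2)) \<and>
           M \<le> 0"
proof -
  have s: "0 < (1/2::real) \<and> (1/2::real) < 1" by simp
  have jL1: "jL \<ge> 1" using jodd(1) by (cases jL) auto
  have jR1: "jR \<ge> 1" using jodd(2) by (cases jR) auto
  define G0L where "G0L = (\<lambda>t. (real jL * \<beta>L / 2) *\<^sub>R
              (cos (real jL / 2 * t) *\<^sub>R theta t - sin (real jL / 2 * t) *\<^sub>R tau t))"
  define G0R where "G0R = (\<lambda>t. (real jR * \<beta>R / 2) *\<^sub>R
              (sin (real jR / 2 * t) *\<^sub>R theta t + cos (real jR / 2 * t) *\<^sub>R tau t))"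
  have UL: "C0_holder_conv {0..pi} (1/2) (\<lambda>\<delta> t. \<delta> powr (- real jL / 2) * u ((- \<epsilon>, 0) + \<delta> *\<^sub>R theta t))
        (\<lambda>t. \<beta>L * cos (real jL / 2 * t)) (at_right 0)"
    using asyL s unfolding C1_holder_conv_def by blast
  have UR: "C0_holder_conv {0..pi} (1/2) (\<lambda>\<delta> t. \<delta> powr (- real jR / 2) * u ((\<epsilon>, 0) + \<delta> *\<^sub>R theta t))
        (\<lambda>t. \<beta>R * sin (real jR / 2 * t)) (at_right 0)"
    using asyR s unfolding C1_holder_conv_def by blast
  have GL: "C0_holder_conv {0..pi} (1/2) (\<lambda>\<delta> t. \<delta> powr (- real jL / 2 + 1) *\<^sub>R g ((- \<epsilon>, 0) + \<delta> *\<^sub>R theta t)) G0L (at_right 0)"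
    using gasyL s unfolding G0L_def by blast
  have GR: "C0_holder_conv {0..pi} (1/2) (\<lambda>\<delta> t. \<delta> powr (- real jR / 2 + 1) *\<^sub>R g ((\<epsilon>, 0) + \<delta> *\<^sub>R theta t)) G0R (at_right 0)"
    using gasyR s unfolding G0R_def by blast
  have cUL: "continuous_on {0..pi} (\<lambda>t. \<beta>L * cos (real jL / 2 * t))" by (intro continuous_intros)
  have cUR: "continuous_on {0..pi} (\<lambda>t. \<beta>R * sin (real jR / 2 * t))" by (intro continuous_intros)
  have cGL: "continuous_on {0..pi} G0L" unfolding G0L_def by (intro continuous_intros)
  have cGR: "continuous_on {0..pi} G0R" unfolding G0R_def by (intro continuous_intros)
  note hL = half_lim[OF jL1 UL GL cUL cGL, of lam]
  note hR = half_lim[OF jR1 UR GR cUR cGR, of lam]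
  define Mlf where "Mlf = (if jL = 1 then - \<epsilon> * pi / 8 * \<beta>L\<^sup>2 else 0)"
  define Mrt where "Mrt = (if jR = 1 then - \<epsilon> * pi / 8 * \<beta>R\<^sup>2 else 0)"
  have hL': "(half_circle_int lam u g (- \<epsilon>, 0) \<longlongrightarrow> Mlf) (at_right 0)"
  proof (cases "jL = 1")
    case True
    have e: "\<And>t. 1/2*(G0L t \<bullet> G0L t)*(-((- \<epsilon>, 0) \<bullet> theta t)) + (G0L t \<bullet> theta t)*((- \<epsilon>, 0) \<bullet> G0L t) = - \<epsilon> * \<beta>L\<^sup>2 / 8"
      unfolding G0L_def True by (rule trigL)
    have "integral {0..pi} (\<lambda>t. 1/2*(G0L t \<bullet> G0L t)*(-((- \<epsilon>, 0) \<bullet> theta t)) + (G0L t \<bullet> theta t)*((- \<epsilon>, 0) \<bullet> G0L t))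
        = - \<epsilon> * pi / 8 * \<beta>L\<^sup>2"
      by (simp only: e) simp
    then show ?thesis using hL True by (simp add: Mlf_def)
  next
    case False
    then show ?thesis using hL by (simp add: Mlf_def)
  qed
  have hR': "(half_circle_int lam u g (\<epsilon>, 0) \<longlongrightarrow> Mrt) (at_right 0)"
  proof (cases "jR = 1")
    case True
    have e: "\<And>t. 1/2*(G0R t \<bullet> G0R t)*(-((\<epsilon>, 0) \<bullet> theta t)) + (G0R t \<bullet> theta t)*((\<epsilon>, 0) \<bullet> G0R t) = - \<epsilon> * \<beta>R\<^sup>2 / 8"
      unfolding G0R_def True by (rule trigR)
    have "integral {0..pi} (\<lambda>t. 1/2*(G0R t \<bullet> G0R t)*(-((\<epsilon>, 0) \<bullet> theta t)) + (G0R t \<bullet> theta t)*((\<epsilon>, 0) \<bullet> G0R t))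
        = - \<epsilon> * pi / 8 * \<beta>R\<^sup>2"
      by (simp only: e) simp
    then show ?thesis using hR True by (simp add: Mrt_def)
  next
    case False
    then show ?thesis using hR by (simp add: Mrt_def)
  qed
  have Meq: "M_delta \<epsilon> lam u g = (\<lambda>\<delta>. half_circle_int lam u g (- \<epsilon>, 0) \<delta> + half_circle_int lam u g (\<epsilon>, 0) \<delta>)"
    by (rule ext) (simp add: M_delta_def)
  have lim: "(M_delta \<epsilon> lam u g \<longlongrightarrow> Mlf + Mrt) (at_right 0)"
    unfolding Meq by (rule tendsto_add[OF hL' hR'])
  have val: "Mlf + Mrt = (if jL > 1 \<and> jR > 1 then 0
                else if jL = 1 \<and> jR > 1 then - \<epsilon> * pi / 8 * \<beta>L\<^sup>2
                else if jL > 1 \<and> jR = 1 then - \<epsilon> * pi / 8 * \<beta>R\<^sup>2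
                else - \<epsilon> * pi / 8 * (\<beta>L\<^sup>2 + \<beta>R\<^sup>2))"
    using jL1 jR1 by (auto simp: Mlf_def Mrt_def algebra_simps)
  have nonpos: "Mlf + Mrt \<le> 0"
  proof -
    have pL: "0 \<le> \<epsilon> * pi * \<beta>L\<^sup>2" using eps(1) by simp
    have pR: "0 \<le> \<epsilon> * pi * \<beta>R\<^sup>2" using eps(1) by simp
    show ?thesis using pL pR by (auto simp: Mlf_def Mrt_def)
  qed
  show ?thesis using lim val nonpos by blast
qed

end
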